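(* Let $E$ be a simple type, $A_1,\dots,A_m,G$ subtypes of $E$, $t$ a normal $\lambda$-term, and $\alpha$ a free variable of $t$ which is not in application position in $t$ (no subterm of $t$ has the form $(\alpha)u$). Let $n\ge0$ and $p_n=\lambda x_1\dots\lambda x_n\lambda x\,x$. If $x_1:A_1,\dots,x_m:A_m\vdash_{\mathcal S} t[p_n/\alpha] : G$, then $Lg(E)\ge n$.
   Context: Simple types are built from type variables and type constants using $\rightarrow$ only; a subtype of $E$ is a subformula of $E$. $Lg(E)$ denotes the number of occurrences of $\rightarrow$ in $E$. The simply typed system $\mathcal S$ derives $\Gamma\vdash_{\mathcal S} t:A$ by: (ax) $\Gamma \vdash y : B$ for $y:B\in\Gamma$; ($\rightarrow_i$) from $\Gamma, x:B \vdash t : C$ infer $\Gamma \vdash \lambda x t : B \rightarrow C$; ($\rightarrow_e$) from $\Gamma \vdash u : B\rightarrow C$ and $\Gamma \vdash v : B$ infer $\Gamma \vdash (u)v : C$. $t[u/\alpha]$ is capture-avoiding substitution; normal means without $\beta$-redex. *)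

theory Defs
  imports Main
begin

datatype ty = TVar nat | TConst nat | Arr ty ty

text \<open>Subtype = subformula.\<close>
inductive subtype :: "ty \<Rightarrow> ty \<Rightarrow> bool" where
  sub_refl: "subtype A A"
| sub_left: "subtype A B \<Longrightarrow> subtype A (Arr B C)"
| sub_right: "subtype A C \<Longrightarrow> subtype A (Arr B C)"

fun Lg :: "ty \<Rightarrow> nat" where
  "Lg (TVar a) = 0"
| "Lg (TConst c) = 0"
| "Lg (Arr A B) = Suc (Lg A + Lg B)"

text \<open>Lambda terms with named variables; App u v stands for (u)v.\<close>
datatype trm = Var nat | App trm trm | Lam nat trm

fun FV :: "trm \<Rightarrow> nat set" where
  "FV (Var x) = {x}"
| "FV (App u v) = FV u \<union> FV v"
| "FV (Lam x s) = FV s - {x}"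

fun normal :: "trm \<Rightarrow> bool" where
  "normal (Var x) = True"
| "normal (App u v) = ((\<forall>x s. u \<noteq> Lam x s) \<and> normal u \<and> normal v)"
| "normal (Lam x s) = normal s"

fun not_app_pos :: "nat \<Rightarrow> trm \<Rightarrow> bool" where
  "not_app_pos a (Var x) = True"
| "not_app_pos a (App u v) = (u \<noteq> Var a \<and> not_app_pos a u \<and> not_app_pos a v)"
| "not_app_pos a (Lam x s) = (x = a \<or> not_app_pos a s)"

text \<open>Substitution t[p/a] of a closed term p for the free occurrences of a;
  since p is closed no capture can occur, so this is capture-avoiding substitution.\<close>
fun subst_closed :: "trm \<Rightarrow> trm \<Rightarrow> nat \<Rightarrow> trm" where
  "subst_closed (Var y) p a = (if y = a then p else Var y)"
| "subst_closed (App u v) p a = App (subst_closed u p a) (subst_closed v p a)"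
| "subst_closed (Lam x s) p a = (if x = a then Lam x s else Lam x (subst_closed s p a))"

fun pn :: "nat \<Rightarrow> trm" where
  "pn 0 = Lam 0 (Var 0)"
| "pn (Suc n) = Lam (Suc n) (pn n)"

inductive typing :: "(nat \<Rightarrow> ty option) \<Rightarrow> trm \<Rightarrow> ty \<Rightarrow> bool" where
  ax: "\<Gamma> y = Some B \<Longrightarrow> typing \<Gamma> (Var y) B"
| arr_i: "typing (\<Gamma>(x \<mapsto> B)) t C \<Longrightarrow> typing \<Gamma> (Lam x t) (Arr B C)"
| arr_e: "typing \<Gamma> u (Arr B C) \<Longrightarrow> typing \<Gamma> v B \<Longrightarrow> typing \<Gamma> (App u v) C"

end

theory Submission
  imports Defs
begin

inductive subterm :: "trm \<Rightarrow> trm \<Rightarrow> bool" where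
  st_refl: "subterm s s"
| st_app1: "subterm s u \<Longrightarrow> subterm s (App u v)"
| st_app2: "subterm s v \<Longrightarrow> subterm s (App u v)"
| st_lam: "subterm s b \<Longrightarrow> subterm s (Lam x b)"

inductive_cases tVar: "typing \<Gamma> (Var y) T"
inductive_cases tApp: "typing \<Gamma> (App u v) T"
inductive_cases tLam: "typing \<Gamma> (Lam x b) T"
inductive_cases sVar: "subterm p (Var y)"
inductive_cases sApp: "subterm p (App u v)"
inductive_cases sLam: "subterm p (Lam x b)"

lemma subtype_Lg: "subtype A B \<Longrightarrow> Lg A \<le> Lg B"
  by (induction rule: subtype.induct) auto

lemma subtype_trans: "subtype B C \<Longrightarrow> subtype A B \<Longrightarrow> subtype A C"
  by (induction rule: subtype.induct) (auto intro: subtype.intros)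

lemma subtype_arr: "subtype (Arr B C) E \<Longrightarrow> subtype B E \<and> subtype C E"
  by (meson subtype_trans subtype.intros)

lemma pn_is_lam: "\<exists>x b. pn n = Lam x b"
  by (cases n) auto

lemma pn_Lg: "typing \<Gamma> (pn n) T \<Longrightarrow> n \<le> Lg T"
proof (induction n arbitrary: \<Gamma> T)
  case 0 then show ?case by simp
next
  case (Suc n)
  from Suc.prems obtain B C \<Gamma>' where "T = Arr B C" "typing \<Gamma>' (pn n) C"
    by (metis pn.simps(2) tLam)
  with Suc.IH[of \<Gamma>' C] show ?case by simp
qed

lemma main:
  "normal s \<Longrightarrow> typing \<Gamma> s T \<Longrightarrow> \<forall>A\<in>ran \<Gamma>. subtype A E \<Longrightarrow>
   ((\<forall>x b. s \<noteq> Lam x b) \<longrightarrow> subtype T E) \<and>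
   ((subtype T E \<or> (\<forall>x b. s \<noteq> Lam x b)) \<longrightarrow> subterm (pn n) s \<longrightarrow> n \<le> Lg E)"
proof (induction s arbitrary: \<Gamma> T)
  case (Var y)
  then have "\<Gamma> y = Some T" by (metis tVar)
  then have "T \<in> ran \<Gamma>" by (simp add: ranI)
  moreover have "\<not> subterm (pn n) (Var y)"
    using pn_is_lam[of n] sVar by (metis trm.distinct(3))
  ultimately show ?case using Var.prems(3) by simp
next
  case (App u v)
  from App.prems(2) obtain B where tu: "typing \<Gamma> u (Arr B T)" and tv: "typing \<Gamma> v B"
    by (metis tApp)
  have nu: "\<forall>x b. u \<noteq> Lam x b" "normal u" "normal v" using App.prems(1) by auto
  have IHu: "(\<forall>x b. u \<noteq> Lam x b) \<longrightarrow> subtype (Arr B T) E"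
    "subtype (Arr B T) E \<or> (\<forall>x b. u \<noteq> Lam x b) \<longrightarrow> subterm (pn n) u \<longrightarrow> n \<le> Lg E"
    using App.IH(1)[OF nu(2) tu App.prems(3)] by simp_all
  have IHv: "subtype B E \<or> (\<forall>x b. v \<noteq> Lam x b) \<longrightarrow> subterm (pn n) v \<longrightarrow> n \<le> Lg E"
    using App.IH(2)[OF nu(3) tv App.prems(3)] by simp
  have sA: "subtype (Arr B T) E" using IHu(1) nu(1) by simp
  then have sB: "subtype B E" and sT: "subtype T E" using subtype_arr[of B T E] by simp_all
  have "subterm (pn n) (App u v) \<Longrightarrow> n \<le> Lg E"
  proof -
    assume "subterm (pn n) (App u v)"
    then have "subterm (pn n) u \<or> subterm (pn n) v"
    proof (rule sApp)
      assume "App u v = pn n" then show ?thesis using pn_is_lam[of n] by auto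
    qed simp_all
    then show ?thesis
      using IHu(2) IHv sA sB by (metis (no_types))
  qed
  then show ?case using sT by simp
next
  case (Lam x b)
  from Lam.prems(2) obtain B C where T: "T = Arr B C" and tb: "typing (\<Gamma>(x \<mapsto> B)) b C"
    by (metis tLam)
  have nb: "normal b" using Lam.prems(1) by simp
  have "subtype T E \<Longrightarrow> subterm (pn n) (Lam x b) \<Longrightarrow> n \<le> Lg E"
  proof -
    assume sT: "subtype T E" and st: "subterm (pn n) (Lam x b)"
    have sB: "subtype B E" and sC: "subtype C E" using subtype_arr[of B C E] sT T by simp_all
    have ctx: "\<forall>A\<in>ran (\<Gamma>(x \<mapsto> B)). subtype A E"
    proof
      fix A assume "A \<in> ran (\<Gamma>(x \<mapsto> B))"
      then obtain z where z: "(\<Gamma>(x \<mapsto> B)) z = Some A" by (auto simp: ran_def)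
      show "subtype A E"
      proof (cases "z = x")
        case True then show ?thesis using z sB by simp
      next
        case False then have "\<Gamma> z = Some A" using z by simp
        then have "A \<in> ran \<Gamma>" by (simp add: ranI)
        then show ?thesis using Lam.prems(3) by blast
      qed
    qed
    from st have "pn n = Lam x b \<or> subterm (pn n) b" by (rule sLam) simp_all
    then show ?thesis
    proof
      assume "pn n = Lam x b"
      then have "n \<le> Lg T" using pn_Lg[of \<Gamma> n T] Lam.prems(2) by simp
      then show ?thesis using subtype_Lg[OF sT] by simp
    next
      assume "subterm (pn n) b"
      moreover have "subtype C E \<or> (\<forall>y c. b \<noteq> Lam y c) \<longrightarrow> subterm (pn n) b \<longrightarrow> n \<le> Lg E"
        using Lam.IH[OF nb tb ctx] by auto
      ultimately show ?thesis using sC by auto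
    qed
  qed
  then show ?case by simp
qed

lemma subst_normal:
  "normal t \<Longrightarrow> not_app_pos a t \<Longrightarrow> normal (subst_closed t (pn n) a)"
proof (induction t)
  case (Var y)
  have "normal (pn n)" by (induction n) auto
  then show ?case by simp
next
  case (App u v)
  have "\<forall>x s. subst_closed u (pn n) a \<noteq> Lam x s"
    using App.prems by (cases u) auto
  then show ?case using App by auto
next
  case (Lam x s) then show ?case by auto
qed

lemma subst_lam:
  "\<forall>x b. t \<noteq> Lam x b \<Longrightarrow> t \<noteq> Var a \<Longrightarrow> \<forall>x b. subst_closed t p a \<noteq> Lam x b"
  by (cases t) auto

lemma subst_subterm: "a \<in> FV t \<Longrightarrow> subterm p (subst_closed t p a)"
  by (induction t) (auto intro: subterm.intros)

theorem lemma2p2p6: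
  fixes E G :: ty and \<Gamma> :: "nat \<Rightarrow> ty option" and t :: trm and \<alpha> n :: nat
  assumes "finite (dom \<Gamma>)"
    and "\<forall>A \<in> ran \<Gamma>. subtype A E"
    and "subtype G E"
    and "normal t"
    and "\<alpha> \<in> FV t"
    and "not_app_pos \<alpha> t"
    and "typing \<Gamma> (subst_closed t (pn n) \<alpha>) G"
  shows "Lg E \<ge> n"
  using main[OF subst_normal[OF assms(4,6)] assms(7) assms(2)] assms(3)
    subst_subterm[OF assms(5), of "pn n"] by blast

end
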